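(* Let $\mathbb{F}$ be a field of characteristic different from $2$ and $\mathcal{J}Spin_n(\mathbb{F})$ the spin factor. Then every 2-local 1-automorphism of $\mathcal{J}Spin_n(\mathbb{F})$ is an automorphism.
   Context: $\mathcal{J}Spin_n(\mathbb{F})$ is the Jordan algebra with basis $\mathbf{1},s_1,\dots,s_n$ and product determined bilinearly by $\mathbf{1}$ being the identity, $s_is_i=\mathbf{1}$, and $s_is_j=0$ for $i\neq j$. A symmetry is an element $s$ with $s^2=\mathbf{1}$, and $U_s(x)=2s(sx)-x$. A 2-local 1-automorphism is a map $\Delta$ (not assumed linear) such that for every $x,y$ there is a symmetry $s$ with $\Delta(x)=U_s(x)$ and $\Delta(y)=U_s(y)$. *)

theory Defs
  imports Main
begin

text \<open>The spin factor JSpin_n(F) is modelled concretely: an element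
  a 1 + sum_{i<n} v_i s_i is the pair (a, v) with v :: nat => 'a vanishing
  outside {0..<n}.\<close>

type_synonym 'a spin = "'a \<times> (nat \<Rightarrow> 'a)"

definition spin_carrier :: "nat \<Rightarrow> ('a::field) spin set" where
  "spin_carrier n = {x. \<forall>i\<ge>n. snd x i = 0}"

definition spin_one :: "('a::field) spin" where
  "spin_one = (1, \<lambda>_. 0)"

definition spin_add :: "('a::field) spin \<Rightarrow> 'a spin \<Rightarrow> 'a spin" where
  "spin_add x y = (fst x + fst y, \<lambda>i. snd x i + snd y i)"

definition spin_smult :: "'a::field \<Rightarrow> 'a spin \<Rightarrow> 'a spin" where
  "spin_smult c x = (c * fst x, \<lambda>i. c * snd x i)"

text \<open>Jordan product, the bilinear extension of 1 being the identity,
  s_i s_i = 1 and s_i s_j = 0 for i \<noteq> j.\<close>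
definition spin_mult :: "nat \<Rightarrow> ('a::field) spin \<Rightarrow> 'a spin \<Rightarrow> 'a spin" where
  "spin_mult n x y =
     (fst x * fst y + (\<Sum>i<n. snd x i * snd y i), \<lambda>i. fst x * snd y i + fst y * snd x i)"

definition spin_symmetry :: "nat \<Rightarrow> ('a::field) spin \<Rightarrow> bool" where
  "spin_symmetry n s \<longleftrightarrow> s \<in> spin_carrier n \<and> spin_mult n s s = spin_one"

definition spin_U :: "nat \<Rightarrow> ('a::field) spin \<Rightarrow> 'a spin \<Rightarrow> 'a spin" where
  "spin_U n s x = spin_add (spin_smult 2 (spin_mult n s (spin_mult n s x))) (spin_smult (-1) x)"

definition two_local_1_aut :: "nat \<Rightarrow> (('a::field) spin \<Rightarrow> 'a spin) \<Rightarrow> bool" where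
  "two_local_1_aut n \<Delta> \<longleftrightarrow>
     (\<forall>x\<in>spin_carrier n. \<forall>y\<in>spin_carrier n. \<exists>s. spin_symmetry n s \<and>
        \<Delta> x = spin_U n s x \<and> \<Delta> y = spin_U n s y)"

definition spin_automorphism :: "nat \<Rightarrow> (('a::field) spin \<Rightarrow> 'a spin) \<Rightarrow> bool" where
  "spin_automorphism n \<Phi> \<longleftrightarrow>
     bij_betw \<Phi> (spin_carrier n) (spin_carrier n) \<and>
     (\<forall>x\<in>spin_carrier n. \<forall>y\<in>spin_carrier n. \<Phi> (spin_add x y) = spin_add (\<Phi> x) (\<Phi> y)) \<and>
     (\<forall>c. \<forall>x\<in>spin_carrier n. \<Phi> (spin_smult c x) = spin_smult c (\<Phi> x)) \<and>
     (\<forall>x\<in>spin_carrier n. \<forall>y\<in>spin_carrier n. \<Phi> (spin_mult n x y) = spin_mult n (\<Phi> x) (\<Phi> y))"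

end

theory Submission
  imports Defs
begin

definition ip :: "nat \<Rightarrow> (nat \<Rightarrow> 'a::field) \<Rightarrow> (nat \<Rightarrow> 'a) \<Rightarrow> 'a" where
  "ip n v w = (\<Sum>i<n. v i * w i)"

lemma sym_cases:
  fixes s :: "('a::field) spin"
  assumes two: "(2::'a) \<noteq> 0" and sy: "spin_symmetry n s"
  shows "(\<forall>x. spin_U n s x = x) \<or>
    (fst s = 0 \<and> ip n (snd s) (snd s) = 1 \<and>
      (\<forall>x. spin_U n s x = (fst x, \<lambda>i. 2 * ip n (snd s) (snd x) * snd s i - snd x i)))"
proof -
  obtain a v where s: "s = (a, v)" by (cases s)
  have m: "spin_mult n s s = spin_one" using sy by (simp add: spin_symmetry_def)
  hence e1: "a * a + ip n v v = 1" and e2: "\<And>i. a * v i + a * v i = 0"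
    by (auto simp: s spin_mult_def spin_one_def ip_def fun_eq_iff)
  have e3: "a * v i = 0" for i
  proof -
    have "2 * (a * v i) = 0" using e2[of i] by (simp add: algebra_simps mult_2)
    thus ?thesis using two by simp
  qed
  show ?thesis
  proof (cases "a = 0")
    case True
    have "spin_U n s x = (fst x, \<lambda>i. 2 * ip n v (snd x) * v i - snd x i)" for x
    proof -
      have "(\<Sum>i<n. v i * (fst x * v i)) = fst x * ip n v v"
        by (simp add: ip_def sum_distrib_left algebra_simps)
      thus ?thesis using True e1
        by (simp add: spin_U_def spin_add_def spin_smult_def spin_mult_def s ip_def[symmetric] fun_eq_iff algebra_simps)
    qed
    thus ?thesis using True e1 s by simp
  next
    case False
    hence v0: "v i = 0" for i using e3[of i] by simp
    have aa: "a * (a * z) = z" for z using e1 v0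
      by (simp add: ip_def mult.assoc[symmetric])
    have "spin_U n s x = x" for x
    proof -
      have "spin_U n s x = (a * (a * (fst x * 2)) - fst x, \<lambda>i. a * (a * (2 * snd x i)) - snd x i)"
        using v0 e1 by (simp add: spin_U_def spin_add_def spin_smult_def spin_mult_def s ip_def algebra_simps)
      also have "\<dots> = (fst x * 2 - fst x, \<lambda>i. 2 * snd x i - snd x i)" by (simp only: aa)
      also have "\<dots> = x" by (simp add: prod_eq_iff fun_eq_iff algebra_simps)
      finally show ?thesis .
    qed
    thus ?thesis by simp
  qed
qed

lemma ip_comb:
  "ip n (\<lambda>i. 2 * c * v i - w i) (\<lambda>i. 2 * d * v i - u i)
     = 4 * c * d * ip n v v - 2 * c * ip n v u - 2 * d * ip n v w + ip n w u"
proof -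
  have "(\<Sum>i<n. (2 * c * v i - w i) * (2 * d * v i - u i)) =
     (\<Sum>i<n. 4 * c * d * (v i * v i) - 2 * c * (v i * u i) - 2 * d * (v i * w i) + w i * u i)"
    by (rule sum.cong) (simp_all add: algebra_simps)
  also have "\<dots> = 4 * c * d * ip n v v - 2 * c * ip n v u - 2 * d * ip n v w + ip n w u"
    by (simp add: ip_def sum.distrib sum_subtractf sum_distrib_left)
  finally show ?thesis by (simp add: ip_def)
qed

lemma ip_lin2:
  "ip n v (\<lambda>i. 2 * c * v i - w i) = 2 * c * ip n v v - ip n v w"
proof -
  have "(\<Sum>i<n. v i * (2 * c * v i - w i)) = (\<Sum>i<n. 2 * c * (v i * v i) - v i * w i)"
    by (rule sum.cong) (simp_all add: algebra_simps)
  thus ?thesis by (simp add: ip_def sum_subtractf sum_distrib_left)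
qed

lemma U_props:
  fixes s :: "('a::field) spin"
  assumes two: "(2::'a) \<noteq> 0" and sy: "spin_symmetry n s"
    and x: "x \<in> spin_carrier n" and y: "y \<in> spin_carrier n"
  shows "spin_U n s x \<in> spin_carrier n" "fst (spin_U n s x) = fst x"
    "ip n (snd (spin_U n s x)) (snd (spin_U n s y)) = ip n (snd x) (snd y)"
    "spin_U n s (spin_U n s x) = x"
proof -
  have sc: "snd s i = 0" if "i \<ge> n" for i using sy that by (simp add: spin_symmetry_def spin_carrier_def)
  have xc: "snd x i = 0" if "i \<ge> n" for i using x that by (simp add: spin_carrier_def)
  from sym_cases[OF two sy]
  have "spin_U n s x \<in> spin_carrier n \<and> fst (spin_U n s x) = fst x \<and>
    ip n (snd (spin_U n s x)) (snd (spin_U n s y)) = ip n (snd x) (snd y) \<and>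
    spin_U n s (spin_U n s x) = x"
  proof
    assume "\<forall>x. spin_U n s x = x"
    hence I: "\<And>x. spin_U n s x = x" by blast
    show ?thesis using x by (simp only: I)
  next
    assume h: "fst s = 0 \<and> ip n (snd s) (snd s) = 1 \<and>
      (\<forall>x. spin_U n s x = (fst x, \<lambda>i. 2 * ip n (snd s) (snd x) * snd s i - snd x i))"
    let ?v = "snd s"
    have U: "\<And>x. spin_U n s x = (fst x, \<lambda>i. 2 * ip n ?v (snd x) * ?v i - snd x i)" using h by blast
    have Q: "ip n ?v ?v = 1" using h by blast
    have "spin_U n s x \<in> spin_carrier n" using sc xc by (simp add: U spin_carrier_def)
    moreover have "ip n (snd (spin_U n s x)) (snd (spin_U n s y)) = ip n (snd x) (snd y)"
      using ip_comb[of n "ip n ?v (snd x)" ?v "snd x" "ip n ?v (snd y)" "snd y"] Q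
      by (simp add: U ip_def algebra_simps)
    moreover have "spin_U n s (spin_U n s x) = x"
      using ip_lin2[of n ?v "ip n ?v (snd x)" "snd x"] Q
      by (simp add: U prod_eq_iff fun_eq_iff algebra_simps)
    ultimately show ?thesis by (simp add: U)
  qed
  thus "spin_U n s x \<in> spin_carrier n" "fst (spin_U n s x) = fst x"
    "ip n (snd (spin_U n s x)) (snd (spin_U n s y)) = ip n (snd x) (snd y)"
    "spin_U n s (spin_U n s x) = x" by auto
qed


lemma ip_lin1: "ip n (\<lambda>i. c1 * a i + c2 * b i) w = c1 * ip n a w + c2 * ip n b w"
  by (simp add: ip_def sum.distrib sum_distrib_left algebra_simps)

lemma ip_delta: "j < n \<Longrightarrow> ip n u (\<lambda>i. if i = j then 1 else 0) = u j"
  by (simp add: ip_def if_distrib cong: if_cong)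

theorem theorem4p5:
  fixes n :: nat and \<Delta> :: "('a::field) spin \<Rightarrow> 'a spin"
  assumes "(2::'a) \<noteq> 0"
    and "two_local_1_aut n \<Delta>"
  shows "spin_automorphism n \<Delta>"
proof -
  note two = assms(1)
  have loc: "\<exists>s. spin_symmetry n s \<and> \<Delta> x = spin_U n s x \<and> \<Delta> y = spin_U n s y"
    if "x \<in> spin_carrier n" "y \<in> spin_carrier n" for x y :: "'a spin"
    using assms(2) that unfolding two_local_1_aut_def by blast
  have D1: "\<Delta> x \<in> spin_carrier n" "fst (\<Delta> x) = fst x" if x: "x \<in> spin_carrier n" for x
  proof -
    obtain s where "spin_symmetry n s" "\<Delta> x = spin_U n s x" using loc[OF x x] by blast
    thus "\<Delta> x \<in> spin_carrier n" "fst (\<Delta> x) = fst x" using U_props[OF two _ x x] by auto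
  qed
  have D2: "ip n (snd (\<Delta> x)) (snd (\<Delta> y)) = ip n (snd x) (snd y)"
    if x: "x \<in> spin_carrier n" and y: "y \<in> spin_carrier n" for x y :: "'a spin"
  proof -
    obtain s where "spin_symmetry n s" "\<Delta> x = spin_U n s x" "\<Delta> y = spin_U n s y"
      using loc[OF x y] by blast
    thus ?thesis using U_props[OF two _ x y] by auto
  qed
  have D3: "\<Delta> (\<Delta> x) = x" if x: "x \<in> spin_carrier n" for x
  proof -
    obtain s where "spin_symmetry n s" "\<Delta> x = spin_U n s x" "\<Delta> (\<Delta> x) = spin_U n s (\<Delta> x)"
      using loc[OF x D1(1)[OF x]] by blast
    thus ?thesis using U_props[OF two _ x x] by auto
  qed
  have key: "snd (\<Delta> x) = (\<lambda>i. c1 * snd (\<Delta> y1) i + c2 * snd (\<Delta> y2) i)"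
    if x: "x \<in> spin_carrier n" and y1: "y1 \<in> spin_carrier n" and y2: "y2 \<in> spin_carrier n"
      and h: "snd x = (\<lambda>i. c1 * snd y1 i + c2 * snd y2 i)" for x y1 y2 c1 c2
  proof
    fix j
    show "snd (\<Delta> x) j = c1 * snd (\<Delta> y1) j + c2 * snd (\<Delta> y2) j"
    proof (cases "j < n")
      case False
      thus ?thesis using D1(1)[OF x] D1(1)[OF y1] D1(1)[OF y2] by (simp add: spin_carrier_def)
    next
      case True
      define e :: "'a spin" where "e = (0, \<lambda>i. if i = j then 1 else 0)"
      have ec: "e \<in> spin_carrier n" using True by (simp add: e_def spin_carrier_def)
      define z where "z = \<Delta> e"
      have zc: "z \<in> spin_carrier n" using D1(1)[OF ec] by (simp add: z_def)
      have dz: "\<Delta> z = e" using D3[OF ec] by (simp add: z_def)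
      have ev: "\<And>w::'a spin. w \<in> spin_carrier n \<Longrightarrow> snd (\<Delta> w) j = ip n (snd w) (snd z)"
      proof -
        fix w :: "'a spin" assume w: "w \<in> spin_carrier n"
        have "snd (\<Delta> w) j = ip n (snd (\<Delta> w)) (snd (\<Delta> z))"
          by (simp add: dz e_def ip_delta[OF True])
        also have "\<dots> = ip n (snd w) (snd z)" using D2[OF w zc] .
        finally show "snd (\<Delta> w) j = ip n (snd w) (snd z)" .
      qed
      show ?thesis using ev[OF x] ev[OF y1] ev[OF y2] h ip_lin1 by simp
    qed
  qed
  have cadd: "spin_add x y \<in> spin_carrier n" if "x \<in> spin_carrier n" "y \<in> spin_carrier n" for x y :: "'a spin"
    using that by (simp add: spin_carrier_def spin_add_def)
  have csm: "spin_smult c x \<in> spin_carrier n" if "x \<in> spin_carrier n" for c and x :: "'a spin"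
    using that by (simp add: spin_carrier_def spin_smult_def)
  have cmul: "spin_mult n x y \<in> spin_carrier n" if "x \<in> spin_carrier n" "y \<in> spin_carrier n" for x y :: "'a spin"
    using that by (simp add: spin_carrier_def spin_mult_def)
  show ?thesis
    unfolding spin_automorphism_def
  proof (intro conjI ballI allI)
    show "bij_betw \<Delta> (spin_carrier n) (spin_carrier n)"
      by (rule bij_betw_byWitness[where f'=\<Delta>]) (auto simp: D1 D3)
  next
    fix x y :: "'a spin" assume x: "x \<in> spin_carrier n" and y: "y \<in> spin_carrier n"
    have "snd (\<Delta> (spin_add x y)) = (\<lambda>i. 1 * snd (\<Delta> x) i + 1 * snd (\<Delta> y) i)"
      by (rule key[OF cadd[OF x y] x y]) (simp add: spin_add_def)
    thus "\<Delta> (spin_add x y) = spin_add (\<Delta> x) (\<Delta> y)"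
      using D1(2)[OF cadd[OF x y]] D1(2)[OF x] D1(2)[OF y]
      by (simp add: prod_eq_iff spin_add_def)
  next
    fix c and x :: "'a spin" assume x: "x \<in> spin_carrier n"
    have "snd (\<Delta> (spin_smult c x)) = (\<lambda>i. c * snd (\<Delta> x) i + 0 * snd (\<Delta> x) i)"
      by (rule key[OF csm[OF x] x x]) (simp add: spin_smult_def)
    thus "\<Delta> (spin_smult c x) = spin_smult c (\<Delta> x)"
      using D1(2)[OF csm[OF x]] D1(2)[OF x]
      by (simp add: prod_eq_iff spin_smult_def)
  next
    fix x y :: "'a spin" assume x: "x \<in> spin_carrier n" and y: "y \<in> spin_carrier n"
    have "snd (\<Delta> (spin_mult n x y)) = (\<lambda>i. fst x * snd (\<Delta> y) i + fst y * snd (\<Delta> x) i)"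
      by (rule key[OF cmul[OF x y] y x]) (simp add: spin_mult_def)
    thus "\<Delta> (spin_mult n x y) = spin_mult n (\<Delta> x) (\<Delta> y)"
      using D1(2)[OF cmul[OF x y]] D1(2)[OF x] D1(2)[OF y] D2[OF x y]
      by (simp add: prod_eq_iff spin_mult_def ip_def)
  qed
qed

end
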